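(* Let $n,m,M$ be positive integers, $A_1,\dots,A_M\in\mathbb{R}^{n\times n}$, $B\in\mathbb{R}^{n\times m}$, $\mathcal{M}=\{1,\dots,M\}$. Given $N\in\mathbb{Z}^+$ and $\omega_N\subset\mathbb{S}\times\mathcal{M}$ with $N$ elements, let $\gamma(\omega_N)$, $P(\omega_N)$, $K(\omega_N)$ be the output of Algorithm 1 (described in the context) run on $\omega_N$, $B$ and some tolerance $\epsilon_{tol}>0$. Suppose $\omega_N$ is an $\epsilon$-covering of $\mathbb{S}\times\mathcal{M}$ for some $\epsilon\in(0,1)$. Then $$\rho(\mathcal{A}_{K(\omega_N)})\le\frac{\gamma(\omega_N)}{1-\kappa(P(\omega_N))\bigl(1-\cos(\delta^{-1}(\epsilon))\bigr)},$$ with the convention that if $\kappa(P(\omega_N))(1-\cos(\delta^{-1}(\epsilon)))\ge1$, the right-hand side is $+\infty$.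
   Context: $\mathbb{S}$ is the unit sphere in $\mathbb{R}^n$ and $\mu$ the uniform probability measure on $\mathbb{S}$. For $x\in\mathbb{S}$, $\theta\in[0,\pi/2]$, $\mathrm{Cap}(x,\theta)=\{v\in\mathbb{S}:|x^\top v|\ge\cos\theta\}$ and $\delta(\theta)=\mu(\mathrm{Cap}(x,\theta))$; $\delta$ is strictly increasing from $[0,\pi/2]$ onto $[0,1]$ with inverse $\delta^{-1}$. Given $\epsilon\in(0,1)$ and $\theta=\delta^{-1}(\epsilon)$, a set $\omega\subset\mathbb{S}\times\mathcal{M}$ is an $\epsilon$-covering of $\mathbb{S}\times\mathcal{M}$ if for every $(x,\sigma)\in\mathbb{S}\times\mathcal{M}$ there exists $z\in\mathbb{S}$ with $(z,\sigma)\in\omega$ and $|z^\top x|\ge\cos\theta$. For $P\succ0$, $\kappa(P)=\lambda_{\max}(P)/\lambda_{\min}(P)$. For $K\in\mathbb{R}^{m\times n}$, $\mathcal{A}_K=\{A_1+BK,\dots,A_M+BK\}$ and $\rho(\mathcal{A}_K)=\lim_{k\to\infty}\max_{(\sigma_0,\dots,\sigma_{k-1})\in\mathcal{M}^k}\|(A_{\sigma_{k-1}}+BK)\cdots(A_{\sigma_0}+BK)\|^{1/k}$ is its joint spectral radius. Algorithm 1 (uses only $B$, the points $x$ and the successors $A_\sigma x$ for $(x,\sigma)\in\omega_N$): define Problem (K-step) for fixed $P$: minimize $\gamma\ge0$ over $(\gamma,K)$ subject to $\begin{pmatrix}\gamma^2x^\top Px & (A_\sigma x+BKx)^\top P\\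 P(A_\sigma x+BKx) & P\end{pmatrix}\succeq0$ for all $(x,\sigma)\in\omega_N$. Define Problem (P-step) for fixed $K$: minimize $\gamma\ge0$ over $(\gamma,P)$ subject to $(A_\sigma x+BKx)^\top P(A_\sigma x+BKx)\le\gamma^2x^\top Px$ for all $(x,\sigma)\in\omega_N$ and $P\succeq I$. Initialize $k=0$, $P_0=I_n$, and $(K_0,\gamma_0)$ a solution of (K-step) with $P=P_0$. Iterate: obtain $P_{k+1}$ from (P-step) with $K=K_k$; obtain $(K_{k+1},\gamma_{k+1})$ from (K-step) with $P=P_{k+1}$; if $|\gamma_{k+1}-\gamma_k|<\epsilon_{tol}$, output $\gamma(\omega_N)=\gamma_{k+1}$, $P(\omega_N)=P_{k+1}$, $K(\omega_N)=K_{k+1}$ and stop; otherwise set $k\leftarrow k+1$ and repeat. *)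

theory Defs
  imports "HOL-Analysis.Analysis"
begin

definition unit_sphere :: "(real^'n) set" where
  "unit_sphere = {x. norm x = 1}"

text \<open>Uniform probability measure on the sphere (cone measure: normalized
  Lebesgue measure of the cone over the set, inside the unit ball).\<close>
definition sphere_mu :: "(real^'n) set \<Rightarrow> real" where
  "sphere_mu S = measure lborel {y. y \<in> ball 0 1 \<and> y \<noteq> 0 \<and> (y /\<^sub>R norm y) \<in> S}
                 / measure lborel (ball (0::real^'n) 1)"

definition Cap :: "real^'n \<Rightarrow> real \<Rightarrow> (real^'n) set" where
  "Cap x \<theta> = {v \<in> unit_sphere. \<bar>x \<bullet> v\<bar> \<ge> cos \<theta>}"

text \<open>delta(theta) = mu(Cap(x,theta)); independent of the unit vector x, we fix one.\<close>
definition cap_delta :: "'n::finite itself \<Rightarrow> real \<Rightarrow> real" where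
  "cap_delta _ \<theta> = sphere_mu (Cap (SOME e::real^'n. norm e = 1) \<theta>)"

definition cap_delta_inv :: "'n::finite itself \<Rightarrow> real \<Rightarrow> real" where
  "cap_delta_inv t \<epsilon> = (THE \<theta>. \<theta> \<in> {0..pi/2} \<and> cap_delta t \<theta> = \<epsilon>)"

definition eps_covering ::
  "((real^'n) \<times> nat) set \<Rightarrow> nat \<Rightarrow> real \<Rightarrow> bool" where
  "eps_covering \<omega> M \<epsilon> \<longleftrightarrow>
     (\<forall>x\<in>unit_sphere. \<forall>\<sigma>\<in>{1..M}. \<exists>z\<in>unit_sphere. (z, \<sigma>) \<in> \<omega> \<and>
        \<bar>z \<bullet> x\<bar> \<ge> cos (cap_delta_inv TYPE('n) \<epsilon>))"

definition eigenvalues :: "real^'n^'n \<Rightarrow> real set" where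
  "eigenvalues P = {l. \<exists>v. v \<noteq> 0 \<and> P *v v = l *\<^sub>R v}"

definition kappa :: "real^'n^'n \<Rightarrow> real" where
  "kappa P = Max (eigenvalues P) / Min (eigenvalues P)"

fun mat_prod_seq :: "(nat \<Rightarrow> real^'n^'n) \<Rightarrow> nat list \<Rightarrow> real^'n^'n" where
  "mat_prod_seq F [] = mat 1"
| "mat_prod_seq F (s # ss) = mat_prod_seq F ss ** F s"

definition jsr :: "nat \<Rightarrow> (nat \<Rightarrow> real^'n^'n) \<Rightarrow> real" where
  "jsr M F = lim (\<lambda>k. Max {onorm (\<lambda>v. mat_prod_seq F ss *v v) powr (1 / real k) | ss.
                             ss \<in> lists {1..M} \<and> length ss = k})"

definition closed_loop :: "(nat \<Rightarrow> real^'n^'n) \<Rightarrow> real^'m^'n \<Rightarrow> real^'n^'m \<Rightarrow> nat \<Rightarrow> real^'n^'n" where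
  "closed_loop A B K \<sigma> = A \<sigma> + B ** K"

text \<open>Problem (K-step) feasibility: gamma >= 0 and the block matrix
  [[gamma^2 x'Px, v'P],[Pv, P]] is PSD (written out as its quadratic form in (t,y)),
  where v = A_sigma x + B K x.\<close>
definition feasK :: "((real^'n) \<times> nat) set \<Rightarrow> (nat \<Rightarrow> real^'n^'n) \<Rightarrow> real^'m^'n
    \<Rightarrow> real^'n^'n \<Rightarrow> real \<Rightarrow> real^'n^'m \<Rightarrow> bool" where
  "feasK \<omega> A B P \<gamma> K \<longleftrightarrow> \<gamma> \<ge> 0 \<and>
     (\<forall>(x, \<sigma>)\<in>\<omega>. \<forall>(t::real) (y::real^'n).
        let v = A \<sigma> *v x + B *v (K *v x) in
        0 \<le> t\<^sup>2 * \<gamma>\<^sup>2 * (x \<bullet> (P *v x)) + 2 * t * (v \<bullet> (P *v y)) + y \<bullet> (P *v y))"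

definition optK :: "((real^'n) \<times> nat) set \<Rightarrow> (nat \<Rightarrow> real^'n^'n) \<Rightarrow> real^'m^'n
    \<Rightarrow> real^'n^'n \<Rightarrow> real \<Rightarrow> real^'n^'m \<Rightarrow> bool" where
  "optK \<omega> A B P \<gamma> K \<longleftrightarrow> feasK \<omega> A B P \<gamma> K \<and> (\<forall>\<gamma>' K'. feasK \<omega> A B P \<gamma>' K' \<longrightarrow> \<gamma> \<le> \<gamma>')"

definition psd_ge_I :: "real^'n^'n \<Rightarrow> bool" where
  "psd_ge_I P \<longleftrightarrow> transpose P = P \<and> (\<forall>x. 0 \<le> x \<bullet> ((P - mat 1) *v x))"

definition feasP :: "((real^'n) \<times> nat) set \<Rightarrow> (nat \<Rightarrow> real^'n^'n) \<Rightarrow> real^'m^'n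
    \<Rightarrow> real^'n^'m \<Rightarrow> real \<Rightarrow> real^'n^'n \<Rightarrow> bool" where
  "feasP \<omega> A B K \<gamma> P \<longleftrightarrow> \<gamma> \<ge> 0 \<and> psd_ge_I P \<and>
     (\<forall>(x, \<sigma>)\<in>\<omega>. let v = A \<sigma> *v x + B *v (K *v x) in
        v \<bullet> (P *v v) \<le> \<gamma>\<^sup>2 * (x \<bullet> (P *v x)))"

definition optP :: "((real^'n) \<times> nat) set \<Rightarrow> (nat \<Rightarrow> real^'n^'n) \<Rightarrow> real^'m^'n
    \<Rightarrow> real^'n^'m \<Rightarrow> real \<Rightarrow> real^'n^'n \<Rightarrow> bool" where
  "optP \<omega> A B K \<gamma> P \<longleftrightarrow> feasP \<omega> A B K \<gamma> P \<and> (\<forall>\<gamma>' P'. feasP \<omega> A B K \<gamma>' P' \<longrightarrow> \<gamma> \<le> \<gamma>')"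

text \<open>(gamma, P, K) is an output of Algorithm 1 (some run, with solvers returning
  optimal solutions) on omega with tolerance tol.\<close>
definition algorithm1_output :: "((real^'n) \<times> nat) set \<Rightarrow> (nat \<Rightarrow> real^'n^'n) \<Rightarrow> real^'m^'n
    \<Rightarrow> real \<Rightarrow> real \<Rightarrow> real^'n^'n \<Rightarrow> real^'n^'m \<Rightarrow> bool" where
  "algorithm1_output \<omega> A B tol \<gamma> P K \<longleftrightarrow>
    (\<exists>Ps Ks gs (k::nat) (hs::nat \<Rightarrow> real).
       Ps 0 = mat 1 \<and> optK \<omega> A B (Ps 0) (gs 0) (Ks 0) \<and>
       (\<forall>j\<le>k. optP \<omega> A B (Ks j) (hs j) (Ps (Suc j)) \<and>
               optK \<omega> A B (Ps (Suc j)) (gs (Suc j)) (Ks (Suc j))) \<and>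
       (\<forall>j<k. \<bar>gs (Suc j) - gs j\<bar> \<ge> tol) \<and>
       \<bar>gs (Suc k) - gs k\<bar> < tol \<and>
       \<gamma> = gs (Suc k) \<and> P = Ps (Suc k) \<and> K = Ks (Suc k))"

end

theory Submission
  imports Defs
begin



lemma sym_dot:
  fixes P :: "real^'n^'n"
  assumes "transpose P = P"
  shows "x \<bullet> (P *v y) = y \<bullet> (P *v x)"
proof -
  have "x \<bullet> (P *v y) = (transpose P *v x) \<bullet> y"
    by (simp add: transpose_matrix_vector dot_lmul_matrix)
  also have "\<dots> = y \<bullet> (P *v x)" using assms by (simp add: inner_commute)
  finally show ?thesis .
qed

lemma transpose_diff': "transpose (A - B :: real^'n^'n) = transpose A - transpose B"
  by (simp add: transpose_def vec_eq_iff)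

lemma attain_max_sphere:
  fixes f :: "real^'n \<Rightarrow> real"
  assumes "continuous_on UNIV f"
  shows "\<exists>x. norm x = 1 \<and> (\<forall>y. norm y = 1 \<longrightarrow> f y \<le> f x)"
proof -
  have "sphere (0::real^'n) 1 \<noteq> {}" using vector_choose_size[of 1] by auto
  from continuous_attains_sup[OF compact_sphere this continuous_on_subset[OF assms]]
  show ?thesis by auto
qed

definition qf :: "real^'n^'n \<Rightarrow> real^'n \<Rightarrow> real" where
  "qf P y = y \<bullet> (P *v y)"

lemma qf_scale: "qf P (c *\<^sub>R y) = c^2 * qf P y"
  by (simp add: qf_def matrix_scaleR_vector_ac scaleR_matrix_vector_assoc[symmetric] power2_eq_square)

lemma qf_cont: "continuous_on UNIV (qf P)"
  unfolding qf_def by (intro continuous_intros matrix_vector_mult_linear_continuous_on)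

lemma qf_homog_le:
  assumes "\<And>y. norm y = 1 \<Longrightarrow> qf P y \<le> m"
  shows "qf P y \<le> m * (norm y)^2"
proof (cases "y = 0")
  case True then show ?thesis by (simp add: qf_def)
next
  case False
  have "qf P ((1/norm y) *\<^sub>R y) \<le> m" using assms False by simp
  then have "(1/norm y)^2 * qf P y \<le> m" by (simp add: qf_scale)
  then show ?thesis using False by (simp add: field_simps power2_eq_square)
qed

lemma qf_homog_ge:
  assumes "\<And>y. norm y = 1 \<Longrightarrow> m \<le> qf P y"
  shows "m * (norm y)^2 \<le> qf P y"
proof (cases "y = 0")
  case True then show ?thesis by (simp add: qf_def)
next
  case False
  have "m \<le> qf P ((1/norm y) *\<^sub>R y)" using assms False by simp
  then have "m \<le> (1/norm y)^2 * qf P y" by (simp add: qf_scale)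
  then show ?thesis using False by (simp add: field_simps power2_eq_square)
qed


lemma quad_zero:
  fixes a b :: real
  assumes "\<And>t. 0 \<le> 2*t*b + t^2*a"
  shows "b = 0"
proof -
  have a: "a \<ge> 0" using assms[of 1] assms[of "-1"] by simp
  define t where "t = -b/(a+1)"
  have ta: "t*a = -b - t" using a unfolding t_def by (simp add: field_simps)
  have tb: "t*b \<le> 0" using a unfolding t_def by (simp add: divide_le_0_iff mult_le_0_iff)
  have "0 \<le> 2*t*b + t^2*a" by (rule assms)
  also have "\<dots> = 2*t*b + t*(t*a)" by (simp add: power2_eq_square)
  also have "\<dots> = t*b - t^2" unfolding ta by (simp add: power2_eq_square algebra_simps)
  finally have "t^2 \<le> 0" using tb by linarith
  then have "t = 0" by simp
  then show ?thesis using a unfolding t_def by simp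
qed

lemma expand:
  fixes S :: "real^'n^'n"
  assumes "transpose S = S"
  shows "(x + t *\<^sub>R w) \<bullet> (S *v (x + t *\<^sub>R w)) = x \<bullet> (S *v x) + 2*t*(w \<bullet> (S *v x)) + t^2 * (w \<bullet> (S *v w))"
proof -
  have s: "x \<bullet> (S *v w) = w \<bullet> (S *v x)" by (rule sym_dot[OF assms])
  show ?thesis
    by (simp add: matrix_vector_right_distrib matrix_vector_mult_scaleR inner_add_left inner_add_right s algebra_simps power2_eq_square)
qed

lemma null_trick:
  fixes S :: "real^'n^'n"
  assumes "transpose S = S" "\<And>y. 0 \<le> y \<bullet> (S *v y)" "x \<bullet> (S *v x) = 0"
  shows "S *v x = 0"
proof -
  have "\<And>w. w \<bullet> (S *v x) = 0"
  proof -
    fix w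
    show "w \<bullet> (S *v x) = 0"
      apply (rule quad_zero[where a="w \<bullet> (S *v w)"])
      using assms(2)[of "x + _ *\<^sub>R w"] expand[OF assms(1), of x _ w] assms(3) by simp
  qed
  from this[of "S *v x"] show ?thesis by simp
qed

lemma eig_ge1:
  assumes "psd_ge_I P" "l \<in> eigenvalues P"
  shows "l \<ge> 1"
proof -
  obtain v where v: "v \<noteq> 0" "P *v v = l *\<^sub>R v" using assms(2) unfolding eigenvalues_def by auto
  have "0 \<le> v \<bullet> ((P - mat 1) *v v)" using assms(1) unfolding psd_ge_I_def by auto
  also have "\<dots> = (l - 1) * (v \<bullet> v)" using v
    by (simp add: matrix_vector_mult_diff_rdistrib matrix_vector_mul_lid inner_diff_right algebra_simps)
  finally have "0 \<le> (l - 1) * (v \<bullet> v)" .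
  moreover have "v \<bullet> v > 0" using v by simp
  ultimately show ?thesis by (simp add: zero_le_mult_iff)
qed

lemma eig_finite:
  fixes P :: "real^'n^'n"
  assumes "transpose P = P"
  shows "finite (eigenvalues P)"
proof -
  define f where "f l = (SOME v. v \<noteq> 0 \<and> P *v v = l *\<^sub>R v)" for l
  have f: "f l \<noteq> 0 \<and> P *v f l = l *\<^sub>R f l" if "l \<in> eigenvalues P" for l
    using that unfolding eigenvalues_def f_def by (metis (mono_tags, lifting) mem_Collect_eq someI_ex)
  have orth: "f l1 \<bullet> f l2 = 0" if "l1 \<in> eigenvalues P" "l2 \<in> eigenvalues P" "l1 \<noteq> l2" for l1 l2
  proof -
    have "l2 * (f l1 \<bullet> f l2) = f l1 \<bullet> (P *v f l2)" using f[OF that(2)] by simp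
    also have "\<dots> = f l2 \<bullet> (P *v f l1)" by (rule sym_dot[OF assms])
    also have "\<dots> = l1 * (f l1 \<bullet> f l2)" using f[OF that(1)] by (simp add: inner_commute)
    finally show ?thesis using that(3) by simp
  qed
  have inj: "inj_on f (eigenvalues P)"
  proof (rule inj_onI, rule ccontr)
    fix x y assume "x \<in> eigenvalues P" "y \<in> eigenvalues P" "f x = f y" "x \<noteq> y"
    then have "f x \<bullet> f x = 0" using orth by metis
    then show False using f[OF \<open>x \<in> eigenvalues P\<close>] by simp
  qed
  have "pairwise orthogonal (f ` eigenvalues P)"
    unfolding pairwise_def orthogonal_def using orth by auto
  moreover have "0 \<notin> f ` eigenvalues P" using f by auto
  ultimately have "independent (f ` eigenvalues P)" by (rule pairwise_orthogonal_independent)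
  then have "finite (f ` eigenvalues P)" using independent_bound by blast
  then show ?thesis using inj finite_imageD by blast
qed

lemma qf_S:
  fixes P :: "real^'n^'n"
  shows "qf (m *\<^sub>R mat 1 - P) y = m * (norm y)^2 - qf P y"
    and "qf (P - m *\<^sub>R mat 1) y = qf P y - m * (norm y)^2"
  by (simp_all add: qf_def matrix_vector_mult_diff_rdistrib scaleR_matrix_vector_assoc[symmetric]
      matrix_vector_mul_lid inner_diff_right power2_norm_eq_inner)

lemma rayleigh_max:
  fixes P :: "real^'n^'n"
  assumes "transpose P = P"
  shows "\<exists>m\<in>eigenvalues P. \<forall>y. qf P y \<le> m * (norm y)^2"
proof -
  obtain x where x: "norm x = 1" "\<And>y. norm y = 1 \<Longrightarrow> qf P y \<le> qf P x"
    using attain_max_sphere[OF qf_cont[of P]] by auto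
  define m where "m = qf P x"
  have le: "qf P y \<le> m * (norm y)^2" for y
    by (rule qf_homog_le) (use x m_def in auto)
  define S where "S = m *\<^sub>R mat 1 - P"
  have tS: "transpose S = S" unfolding S_def using assms by (simp add: transpose_diff' transpose_scalar transpose_mat)
  have "S *v x = 0"
  proof (rule null_trick[OF tS])
    fix y show "0 \<le> y \<bullet> (S *v y)" using le[of y] qf_S(1)[of m P y] unfolding S_def qf_def by simp
  next
    show "x \<bullet> (S *v x) = 0" using qf_S(1)[of m P x] x(1) unfolding S_def qf_def m_def by simp
  qed
  then have "P *v x = m *\<^sub>R x" unfolding S_def
    by (simp add: matrix_vector_mult_diff_rdistrib scaleR_matrix_vector_assoc[symmetric] matrix_vector_mul_lid)
  moreover have "x \<noteq> 0" using x by auto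
  ultimately have "m \<in> eigenvalues P" unfolding eigenvalues_def by auto
  with le show ?thesis by blast
qed

lemma rayleigh_min:
  fixes P :: "real^'n^'n"
  assumes "transpose P = P"
  shows "\<exists>m\<in>eigenvalues P. \<forall>y. m * (norm y)^2 \<le> qf P y"
proof -
  have "continuous_on UNIV (\<lambda>y. - qf P y)" using qf_cont by (intro continuous_intros)
  then obtain x where x: "norm x = 1" "\<And>y. norm y = 1 \<Longrightarrow> qf P x \<le> qf P y"
    using attain_max_sphere by force
  define m where "m = qf P x"
  have ge: "m * (norm y)^2 \<le> qf P y" for y
    by (rule qf_homog_ge) (use x m_def in auto)
  define S where "S = P - m *\<^sub>R mat 1"
  have tS: "transpose S = S" unfolding S_def using assms by (simp add: transpose_diff' transpose_scalar transpose_mat)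
  have "S *v x = 0"
  proof (rule null_trick[OF tS])
    fix y show "0 \<le> y \<bullet> (S *v y)" using ge[of y] qf_S(2)[of P m y] unfolding S_def qf_def by simp
  next
    show "x \<bullet> (S *v x) = 0" using qf_S(2)[of P m x] x(1) unfolding S_def qf_def m_def by simp
  qed
  then have "P *v x = m *\<^sub>R x" unfolding S_def
    by (simp add: matrix_vector_mult_diff_rdistrib scaleR_matrix_vector_assoc[symmetric] matrix_vector_mul_lid)
  moreover have "x \<noteq> 0" using x by auto
  ultimately have "m \<in> eigenvalues P" unfolding eigenvalues_def by auto
  with ge show ?thesis by blast
qed

lemma eig_bounds:
  fixes P :: "real^'n^'n"
  assumes "psd_ge_I P"
  shows "Min (eigenvalues P) \<ge> 1" "\<And>y. qf P y \<le> Max (eigenvalues P) * (norm y)^2"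
    "\<And>y. Min (eigenvalues P) * (norm y)^2 \<le> qf P y"
proof -
  have t: "transpose P = P" using assms unfolding psd_ge_I_def by auto
  have fin: "finite (eigenvalues P)" by (rule eig_finite[OF t])
  obtain m1 where m1: "m1 \<in> eigenvalues P" "\<And>y. qf P y \<le> m1 * (norm y)^2" using rayleigh_max[OF t] by blast
  obtain m2 where m2: "m2 \<in> eigenvalues P" "\<And>y. m2 * (norm y)^2 \<le> qf P y" using rayleigh_min[OF t] by blast
  have ne: "eigenvalues P \<noteq> {}" using m1 by auto
  show "Min (eigenvalues P) \<ge> 1" using eig_ge1[OF assms] Min_in[OF fin ne] by blast
  show "qf P y \<le> Max (eigenvalues P) * (norm y)^2" for y
    using m1(2)[of y] Max_ge[OF fin m1(1)] by (smt (verit) mult_right_mono zero_le_power2)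
  show "Min (eigenvalues P) * (norm y)^2 \<le> qf P y" for y
    using m2(2)[of y] Min_le[OF fin m2(1)] by (smt (verit) mult_right_mono zero_le_power2)
qed

lemma attain_max_sphere':
  fixes f :: "real^'n \<Rightarrow> real"
  assumes "continuous_on (sphere 0 1) f"
  shows "\<exists>x. norm x = 1 \<and> (\<forall>y. norm y = 1 \<longrightarrow> f y \<le> f x)"
proof -
  have "sphere (0::real^'n) 1 \<noteq> {}" using vector_choose_size[of 1] by auto
  from continuous_attains_sup[OF compact_sphere this assms]
  show ?thesis by auto
qed

lemma final_ineq:
  fixes L2 D S2 p \<gamma> :: real
  assumes "L2 \<ge> 0" "D > 0" "S2 > 0" "2*p \<ge> S2*D" "4*L2*p^2 \<le> \<gamma>^2*S2^2"
  shows "L2 \<le> (\<gamma>/D)^2"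
proof -
  have "(S2*D)^2 \<le> (2*p)^2" using assms by (intro power_mono) auto
  then have "L2*(S2*D)^2 \<le> L2*(2*p)^2" using assms(1) by (rule mult_left_mono)
  also have "\<dots> = 4*L2*p^2" by (simp add: power2_eq_square)
  also have "\<dots> \<le> \<gamma>^2*S2^2" by fact
  finally have "(L2*D^2) * S2^2 \<le> \<gamma>^2 * S2^2" by (simp add: power_mult_distrib algebra_simps)
  then have "L2*D^2 \<le> \<gamma>^2" using assms(3) by simp
  then show ?thesis using assms(2) by (simp add: power_divide field_simps)
qed

lemma tr2:
  fixes A :: "real^'n^'m"
  shows "x \<bullet> (transpose A *v v) = (A *v x) \<bullet> v"
proof -
  have "x \<bullet> (transpose A *v v) = (v v* A) \<bullet> x" by (simp add: transpose_matrix_vector inner_commute)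
  also have "\<dots> = v \<bullet> (A *v x)" by (rule dot_lmul_matrix)
  finally show ?thesis by (simp add: inner_commute)
qed

lemma qf_FPF:
  fixes F P :: "real^'n^'n"
  shows "qf (transpose F ** P ** F) y = qf P (F *v y)"
proof -
  have "y \<bullet> ((transpose F ** P ** F) *v y) = y \<bullet> (transpose F *v (P *v (F *v y)))"
    by (simp add: matrix_vector_mul_assoc matrix_mul_assoc)
  also have "\<dots> = (F *v y) \<bullet> (P *v (F *v y))"
    by (rule tr2)
  finally show ?thesis unfolding qf_def .
qed

lemma core:
  fixes P F :: "real^'n^'n" and c \<gamma> :: real
  assumes psd: "psd_ge_I P"
    and D: "0 < 1 - kappa P * (1 - c)" and c1: "c \<le> 1"
    and cov: "\<And>x. norm x = 1 \<Longrightarrow> \<exists>z. norm z = 1 \<and> qf P (F *v z) \<le> \<gamma>^2 * qf P z \<and> c \<le> \<bar>z \<bullet> x\<bar>"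
  shows "qf P (F *v y) \<le> (\<gamma> / (1 - kappa P * (1 - c)))^2 * qf P y"
proof -
  define lmin where "lmin = Min (eigenvalues P)"
  define lmax where "lmax = Max (eigenvalues P)"
  have lmin1: "lmin \<ge> 1" unfolding lmin_def by (rule eig_bounds(1)[OF psd])
  have qmax: "qf P y \<le> lmax * (norm y)^2" for y unfolding lmax_def by (rule eig_bounds(2)[OF psd])
  have qmin: "lmin * (norm y)^2 \<le> qf P y" for y unfolding lmin_def by (rule eig_bounds(3)[OF psd])
  have tP: "transpose P = P" using psd unfolding psd_ge_I_def by auto
  have kap: "kappa P = lmax / lmin" unfolding kappa_def lmax_def lmin_def ..
  have qpos: "qf P y > 0" if "norm y = 1" for y using qmin[of y] lmin1 that by simp
  have cont: "continuous_on (sphere 0 1) (\<lambda>y. qf P (F *v y) / qf P y)"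
  proof (intro continuous_on_divide)
    show "continuous_on (sphere 0 1) (\<lambda>y. qf P (F *v y))"
      using continuous_on_compose[OF matrix_vector_mult_linear_continuous_on[of _ F] continuous_on_subset[OF qf_cont[of P]]]
      by (simp add: o_def)
    show "continuous_on (sphere 0 1) (qf P)" using continuous_on_subset[OF qf_cont] by blast
    show "\<forall>x\<in>sphere 0 1. qf P x \<noteq> 0" using qpos by force
  qed
  obtain x0 where x0: "norm x0 = 1" "\<And>y. norm y = 1 \<Longrightarrow> qf P (F *v y) / qf P y \<le> qf P (F *v x0) / qf P x0"
    using attain_max_sphere'[OF cont] by blast
  define L2 where "L2 = qf P (F *v x0) / qf P x0"
  have qFnn: "qf P v \<ge> 0" for v using qmin[of v] lmin1 by (smt (verit) mult_nonneg_nonneg zero_le_power2)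
  have L2nn: "L2 \<ge> 0" unfolding L2_def using qFnn qpos[OF x0(1)] by simp
  have qx0: "qf P (F *v x0) = L2 * qf P x0" unfolding L2_def using qpos[OF x0(1)] by simp
  define S where "S = L2 *\<^sub>R P - transpose F ** P ** F"
  have qS: "qf S y = L2 * qf P y - qf P (F *v y)" for y
    unfolding S_def using qf_FPF[of F P y]
    by (simp add: qf_def matrix_vector_mult_diff_rdistrib scaleR_matrix_vector_assoc[symmetric] inner_diff_right)
  have tS: "transpose S = S" unfolding S_def
    by (simp add: transpose_diff' transpose_scalar matrix_transpose_mul tP matrix_mul_assoc)
  have Sunit: "0 \<le> qf S y" if "norm y = 1" for y
    using x0(2)[OF that] qpos[OF that] unfolding qS L2_def[symmetric] by (simp add: field_simps)
  have Sall: "0 * (norm y)^2 \<le> qf S y" for y by (rule qf_homog_ge) (use Sunit in auto)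
  have S0: "S *v x0 = 0"
    by (rule null_trick[OF tS]) (use Sall qS[of x0] qx0 in \<open>auto simp: qf_def\<close>)
  have orth: "(F *v w) \<bullet> (P *v (F *v x0)) = L2 * (w \<bullet> (P *v x0))" for w
  proof -
    have "0 = w \<bullet> (S *v x0)" using S0 by simp
    also have "\<dots> = L2 * (w \<bullet> (P *v x0)) - w \<bullet> ((transpose F ** P ** F) *v x0)"
      unfolding S_def by (simp add: matrix_vector_mult_diff_rdistrib scaleR_matrix_vector_assoc[symmetric] inner_diff_right)
    also have "w \<bullet> ((transpose F ** P ** F) *v x0) = (F *v w) \<bullet> (P *v (F *v x0))"
      by (metis tr2 matrix_vector_mul_assoc matrix_mul_assoc)
    finally show ?thesis by simp
  qed
  have all: "qf P (F *v y) \<le> L2 * qf P y" for y using Sall[of y] qS[of y] by simp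
  obtain z where z: "norm z = 1" "qf P (F *v z) \<le> \<gamma>^2 * qf P z" "c \<le> \<bar>z \<bullet> x0\<bar>"
    using cov[OF x0(1)] by blast
  define z' where "z' = (if z \<bullet> x0 \<ge> 0 then z else - z)"
  have z'1: "norm z' = 1" using z(1) unfolding z'_def by auto
  have z'c: "c \<le> z' \<bullet> x0" using z(3) unfolding z'_def by auto
  have z'g: "qf P (F *v z') \<le> \<gamma>^2 * qf P z'"
    using z(2) qf_scale[of P "-1" z] qf_scale[of P "-1" "F *v z"] unfolding z'_def
    by (auto simp: vec.neg)
  define qx where "qx = qf P x0"
  define qz where "qz = qf P z'"
  define p where "p = z' \<bullet> (P *v x0)"
  have qxp: "qx > 0" unfolding qx_def using qpos[OF x0(1)] .
  define \<alpha> where "\<alpha> = p / qx"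
  define w where "w = z' - \<alpha> *\<^sub>R x0"
  have wo: "w \<bullet> (P *v x0) = 0" unfolding w_def \<alpha>_def p_def
    using qxp by (simp add: inner_diff_left qx_def qf_def)
  have Fz: "F *v z' = F *v w + \<alpha> *\<^sub>R (F *v x0)"
    unfolding w_def by (simp add: matrix_vector_right_distrib matrix_vector_mult_diff_distrib matrix_vector_mult_scaleR)
  have "qf P (F *v z') = qf P (F *v w) + 2*\<alpha>*((F *v x0) \<bullet> (P *v (F *v w))) + \<alpha>^2 * qf P (F *v x0)"
    unfolding Fz qf_def by (rule expand[OF tP])
  also have "(F *v x0) \<bullet> (P *v (F *v w)) = (F *v w) \<bullet> (P *v (F *v x0))" by (rule sym_dot[OF tP])
  also have "\<dots> = 0" using orth[of w] wo by simp
  finally have "qf P (F *v z') \<ge> \<alpha>^2 * (L2 * qx)" using qFnn[of "F *v w"] qx0 unfolding qx_def by simp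
  also have "\<alpha>^2 * (L2 * qx) = L2 * p^2 / qx" unfolding \<alpha>_def using qxp by (simp add: power2_eq_square field_simps)
  finally have "L2 * p^2 / qx \<le> \<gamma>^2 * qz" using z'g unfolding qz_def by linarith
  then have A: "L2 * p^2 \<le> \<gamma>^2 * qz * qx" using qxp by (simp add: field_simps)
  have "qf P (z' - x0) = qz + qx - 2*p" unfolding qz_def qx_def p_def qf_def
    using sym_dot[OF tP, of x0 z'] by (simp add: matrix_vector_mult_diff_distrib inner_diff_left inner_diff_right)
  moreover have "qf P (z' - x0) \<le> lmax * (2 - 2 * (z' \<bullet> x0))"
  proof -
    have "z' \<bullet> z' = 1" "x0 \<bullet> x0 = 1" using z'1 x0(1) by (simp_all add: dot_square_norm)
    then show ?thesis using qmax[of "z' - x0"]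
      by (simp add: power2_norm_eq_inner inner_diff_left inner_diff_right inner_commute)
  qed
  moreover have "lmax \<ge> 0" using qmax[of z'] qpos[OF z'1] z'1 by simp
  moreover have "lmax * (2 - 2 * (z' \<bullet> x0)) \<le> lmax * (2*(1 - c))"
    using z'c \<open>lmax \<ge> 0\<close> by (intro mult_left_mono) auto
  ultimately have B: "2*p \<ge> qz + qx - 2*lmax*(1 - c)" by linarith
  have qzl: "qz \<ge> lmin" "qx \<ge> lmin" using qmin[of z'] qmin[of x0] z'1 x0(1) unfolding qz_def qx_def by auto
  define k where "k = kappa P * (1 - c)"
  have k0: "k \<ge> 0" unfolding k_def kap using lmin1 qmax[of z'] qpos[OF z'1] z'1 c1 by simp
  have "2*lmax*(1-c) = 2*lmin*k" unfolding k_def kap using lmin1 by simp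
  also have "\<dots> \<le> (qz + qx) * k" using qzl k0 by (intro mult_right_mono) auto
  finally have C: "2*p \<ge> (qz + qx) * (1 - k)" using B by (simp add: algebra_simps)
  have "(qz+qx)^2 - 4*qz*qx = (qz-qx)^2" by (simp add: power2_eq_square algebra_simps)
  then have E: "4*qz*qx \<le> (qz+qx)^2" using zero_le_power2[of "qz-qx"] by linarith
  have "4*L2*p^2 \<le> \<gamma>^2 * (4*qz*qx)" using A by simp
  also have "\<dots> \<le> \<gamma>^2 * (qz+qx)^2" using E by (intro mult_left_mono) auto
  finally have "L2 \<le> (\<gamma> / (1 - k))^2"
    using final_ineq[OF L2nn, of "1-k" "qz+qx" p \<gamma>] D C qzl lmin1 unfolding k_def by simp
  then have "L2 * qf P y \<le> (\<gamma> / (1 - k))^2 * qf P y" using qFnn by (intro mult_right_mono) auto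
  then show ?thesis using all[of y] unfolding k_def by simp
qed

lemma powr_pow_inv:
  fixes x :: real assumes "x \<ge> 0" "m \<ge> 1"
  shows "(x powr (1/real m)) ^ m = x"
proof (cases "x = 0")
  case True then show ?thesis using assms by simp
next
  case False
  then have xp: "x > 0" using assms by simp
  have "(x powr (1/real m)) ^ m = (x powr (1/real m)) powr (real m)"
    using xp by (simp add: powr_realpow)
  also have "\<dots> = x" using assms by (simp add: powr_powr)
  finally show ?thesis .
qed

lemma pow_powr_inv:
  fixes \<beta> :: real assumes "\<beta> > 0" "k \<ge> 1"
  shows "(\<beta> ^ k) powr (1/real k) = \<beta>"
proof -
  have "\<beta> ^ k = \<beta> powr real k" using assms by (simp add: powr_realpow)
  then show ?thesis using assms by (simp add: powr_powr)
qed

lemma fekete: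
  fixes u :: "nat \<Rightarrow> real"
  assumes nn: "\<And>k. 0 \<le> u k" and sm: "\<And>k l. u (k+l) \<le> u k * u l"
  shows "convergent (\<lambda>k. u k powr (1/real k))"
proof -
  define b where "b k = u k powr (1/real k)" for k
  define B where "B = b ` {1..}"
  define \<rho> where "\<rho> = Inf B"
  have bnn: "b k \<ge> 0" for k unfolding b_def by simp
  have Bne: "B \<noteq> {}" unfolding B_def by auto
  have Bbdd: "bdd_below B" unfolding B_def using bnn by (intro bdd_belowI[of _ 0]) auto
  have rho_le: "\<rho> \<le> b k" if "k \<ge> 1" for k
    unfolding \<rho>_def using that Bbdd by (intro cInf_lower) (auto simp: B_def)
  have "b \<longlonglongrightarrow> \<rho>"
  proof (rule LIMSEQ_I)
    fix \<epsilon> :: real assume ep: "\<epsilon> > 0"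
    have "Inf B < \<rho> + \<epsilon>/2" using ep unfolding \<rho>_def by simp
    then obtain m where m: "m \<ge> 1" "b m < \<rho> + \<epsilon>/2"
      using cInf_less_iff[OF Bne Bbdd] unfolding B_def by auto
    define \<beta> where "\<beta> = b m + \<epsilon>/4"
    have bp: "\<beta> > 0" unfolding \<beta>_def using bnn[of m] ep by simp
    have brho: "\<beta> < \<rho> + \<epsilon>" unfolding \<beta>_def using m ep by simp
    have um: "u m \<le> \<beta> ^ m"
    proof -
      have "u m = b m ^ m" unfolding b_def using powr_pow_inv[OF nn m(1)] by simp
      also have "\<dots> \<le> \<beta> ^ m" using bnn[of m] ep unfolding \<beta>_def by (intro power_mono) auto
      finally show ?thesis .
    qed
    have qr: "u (q*m + r) \<le> u m ^ q * u r" for q r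
    proof (induction q)
      case 0 then show ?case by simp
    next
      case (Suc q)
      have "u (Suc q * m + r) = u (m + (q*m + r))" by (simp add: algebra_simps)
      also have "\<dots> \<le> u m * u (q*m + r)" by (rule sm)
      also have "\<dots> \<le> u m * (u m ^ q * u r)" using Suc nn[of m] by (intro mult_left_mono) auto
      finally show ?case by simp
    qed
    define C where "C = Max (u ` {..<m})"
    have Cge: "u r \<le> C" if "r < m" for r unfolding C_def using that by (intro Max_ge) auto
    have C0: "C \<ge> 0" using Cge[of 0] nn[of 0] m by simp
    define G where "G = max 1 ((1/\<beta>)^m)"
    define E where "E = C * G"
    have E0: "E \<ge> 0" unfolding E_def G_def using C0 by simp
    have bound: "u k \<le> \<beta> ^ k * E" for k
    proof -
      define q where "q = k div m"
      define r where "r = k mod m"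
      have k: "k = q*m + r" unfolding q_def r_def by simp
      have rm: "r < m" unfolding r_def using m by simp
      have Gr: "(1/\<beta>)^r \<le> G"
      proof (cases "1/\<beta> \<ge> 1")
        case True
        then have "(1/\<beta>)^r \<le> (1/\<beta>)^m" using rm by (intro power_increasing) auto
        then show ?thesis unfolding G_def by simp
      next
        case False
        then have "(1/\<beta>)^r \<le> 1" using bp by (intro power_le_one) auto
        then show ?thesis unfolding G_def by simp
      qed
      have "u k \<le> u m ^ q * u r" using qr k by simp
      also have "\<dots> \<le> (\<beta>^m)^q * C"
        using um Cge[OF rm] nn bp by (intro mult_mono power_mono) auto
      also have "(\<beta>^m)^q = \<beta>^k * (1/\<beta>)^r"
        using bp unfolding k by (simp add: power_add power_mult power_divide field_simps mult.commute)
      also have "\<beta>^k * (1/\<beta>)^r * C \<le> \<beta>^k * G * C"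
        using Gr C0 bp by (intro mult_right_mono mult_left_mono) auto
      finally show ?thesis unfolding E_def by (simp add: algebra_simps)
    qed
    have bk: "b k \<le> \<beta> * E powr (1/real k)" if "k \<ge> 1" for k
    proof -
      have "b k \<le> (\<beta>^k * E) powr (1/real k)" unfolding b_def
        using bound[of k] nn[of k] by (intro powr_mono2) auto
      also have "\<dots> = (\<beta>^k) powr (1/real k) * E powr (1/real k)"
        using bp E0 by (simp add: powr_mult)
      also have "\<dots> = \<beta> * E powr (1/real k)" using pow_powr_inv[OF bp that] by simp
      finally show ?thesis .
    qed
    have ev: "eventually (\<lambda>k. E powr (1/real k) < (\<rho> + \<epsilon>)/\<beta>) sequentially"
    proof (cases "E = 0")
      case True
      have "0 < (\<rho> + \<epsilon>)/\<beta>" using bp brho by simp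
      then show ?thesis using True by simp
    next
      case False
      have "(\<lambda>k. E powr (1/real k)) \<longlonglongrightarrow> E powr 0"
        using False by (intro tendsto_powr tendsto_const lim_1_over_n) auto
      moreover have "E powr 0 < (\<rho> + \<epsilon>)/\<beta>" using False E0 bp brho by simp
      ultimately show ?thesis by (rule order_tendstoD(2))
    qed
    then obtain N where N: "\<And>k. k \<ge> N \<Longrightarrow> E powr (1/real k) < (\<rho> + \<epsilon>)/\<beta>"
      unfolding eventually_sequentially by blast
    show "\<exists>no. \<forall>n\<ge>no. norm (b n - \<rho>) < \<epsilon>"
    proof (intro exI allI impI)
      fix n assume n: "max N 1 \<le> n"
      have "b n \<le> \<beta> * E powr (1/real n)" using bk n by simp
      also have "\<dots> < \<beta> * ((\<rho> + \<epsilon>)/\<beta>)" using N[of n] n bp by (intro mult_strict_left_mono) auto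
      also have "\<dots> = \<rho> + \<epsilon>" using bp by simp
      finally have "b n < \<rho> + \<epsilon>" .
      moreover have "\<rho> \<le> b n" using rho_le n by simp
      ultimately show "norm (b n - \<rho>) < \<epsilon>" using ep by simp
    qed
  qed
  then show ?thesis unfolding b_def by (rule convergentI)
qed

lemma mat_prod_seq_append:
  "mat_prod_seq F (xs @ ys) = mat_prod_seq F ys ** mat_prod_seq F xs"
  by (induction xs) (simp_all add: matrix_mul_assoc)




lemma jsr_bound:
  fixes F :: "nat \<Rightarrow> real^'n^'n" and P :: "real^'n^'n"
  assumes M1: "M \<ge> 1" and psd: "psd_ge_I P" and R0: "R \<ge> 0"
    and step: "\<And>\<sigma> y. \<sigma> \<in> {1..M} \<Longrightarrow> qf P (F \<sigma> *v y) \<le> R^2 * qf P y"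
  shows "jsr M F \<le> R"
proof -
  define U where "U k = {ss. ss \<in> lists {1..M} \<and> length ss = k}" for k
  define nu where "nu ss = onorm (\<lambda>v. mat_prod_seq F ss *v v)" for ss
  define u where "u k = Max (nu ` U k)" for k
  have Ufin: "finite (U k)" for k
    unfolding U_def lists_eq_set using finite_lists_length_eq[of "{1..M}" k] by simp
  have Une: "U k \<noteq> {}" for k
  proof -
    have "replicate k 1 \<in> U k" unfolding U_def using M1 by auto
    then show ?thesis by auto
  qed
  have nunn: "nu ss \<ge> 0" for ss unfolding nu_def
    by (rule onorm_pos_le) (simp add: matrix_vector_mul_bounded_linear)
  have nule: "nu ss \<le> u k" if "ss \<in> U k" for ss k
    unfolding u_def using that Ufin by (intro Max_ge) auto
  have unn: "u k \<ge> 0" for k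
  proof -
    obtain ss where "ss \<in> U k" using Une by blast
    then show ?thesis using nule nunn by (meson order_trans)
  qed
  have sub: "u (k + l) \<le> u k * u l" for k l
  proof -
    have "nu ss \<le> u k * u l" if ss: "ss \<in> U (k+l)" for ss
    proof -
      have t: "take k ss \<in> U k" and d: "drop k ss \<in> U l" using ss unfolding U_def
        by (auto dest: in_set_takeD in_set_dropD)
      have "mat_prod_seq F ss = mat_prod_seq F (drop k ss) ** mat_prod_seq F (take k ss)"
        using mat_prod_seq_append[of F "take k ss" "drop k ss"] by simp
      then have "(\<lambda>v. mat_prod_seq F ss *v v) = (\<lambda>v. mat_prod_seq F (drop k ss) *v v) \<circ> (\<lambda>v. mat_prod_seq F (take k ss) *v v)"
        by (simp add: o_def matrix_vector_mul_assoc)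
      then have "nu ss \<le> nu (drop k ss) * nu (take k ss)" unfolding nu_def
        by (metis onorm_compose matrix_vector_mul_bounded_linear)
      also have "\<dots> \<le> u l * u k" using nule[OF t] nule[OF d] nunn unn by (intro mult_mono) auto
      finally show ?thesis by (simp add: mult.commute)
    qed
    then show ?thesis unfolding u_def[of "k+l"] using Ufin Une by (simp add: Max_le_iff)
  qed
  have conv: "convergent (\<lambda>k. u k powr (1/real k))" by (rule fekete[OF unn sub])
  have jsr_eq: "jsr M F = lim (\<lambda>k. u k powr (1/real k))"
  proof -
    have "Max {onorm (\<lambda>v. mat_prod_seq F ss *v v) powr (1 / real k) | ss. ss \<in> lists {1..M} \<and> length ss = k}
          = u k powr (1/real k)" for k
    proof -
      define f where "f x = (max 0 x) powr (1/real k)" for x :: real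
      have mono: "mono f" unfolding f_def by (intro monoI powr_mono2) auto
      have "{onorm (\<lambda>v. mat_prod_seq F ss *v v) powr (1 / real k) | ss. ss \<in> lists {1..M} \<and> length ss = k}
            = f ` (nu ` U k)"
      proof -
        have fe: "(\<lambda>ss. f (nu ss)) = (\<lambda>ss. nu ss powr (1/real k))"
          by (rule ext) (simp add: f_def nunn)
        have "{onorm (\<lambda>v. mat_prod_seq F ss *v v) powr (1 / real k) | ss. ss \<in> lists {1..M} \<and> length ss = k}
             = (\<lambda>ss. nu ss powr (1/real k)) ` U k"
          unfolding U_def nu_def by (rule setcompr_eq_image)
        then show ?thesis unfolding image_image fe .
      qed
      then have "Max {onorm (\<lambda>v. mat_prod_seq F ss *v v) powr (1 / real k) | ss. ss \<in> lists {1..M} \<and> length ss = k}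
           = Max (f ` (nu ` U k))" by (rule arg_cong)
      also have "\<dots> = f (u k)" unfolding u_def
        using mono_Max_commute[OF mono, of "nu ` U k"] Ufin[of k] Une[of k] by (metis finite_imageI image_is_empty)
      also have "\<dots> = u k powr (1/real k)" unfolding f_def using unn[of k] by simp
      finally show ?thesis .
    qed
    then show ?thesis unfolding jsr_def by presburger
  qed
  define lmin where "lmin = Min (eigenvalues P)"
  define lmax where "lmax = Max (eigenvalues P)"
  have lmin1: "lmin \<ge> 1" unfolding lmin_def by (rule eig_bounds(1)[OF psd])
  have qmax: "qf P y \<le> lmax * (norm y)^2" for y unfolding lmax_def by (rule eig_bounds(2)[OF psd])
  have qmin: "lmin * (norm y)^2 \<le> qf P y" for y unfolding lmin_def by (rule eig_bounds(3)[OF psd])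
  have lmax0: "lmax \<ge> 0"
  proof -
    obtain e :: "real^'n" where "norm e = 1" using vector_choose_size[of 1] by auto
    then show ?thesis using qmax[of e] qmin[of e] lmin1 by simp
  qed
  define \<kappa> where "\<kappa> = lmax / lmin"
  have kpos: "\<kappa> > 0"
  proof -
    obtain e :: "real^'n" where "norm e = 1" using vector_choose_size[of 1] by auto
    then have "lmin \<le> lmax" using qmax[of e] qmin[of e] by simp
    then show ?thesis unfolding \<kappa>_def using lmin1 by simp
  qed
  have k0: "\<kappa> \<ge> 0" using kpos by simp
  have prodq: "qf P (mat_prod_seq F ss *v y) \<le> (R^2)^(length ss) * qf P y" if "set ss \<subseteq> {1..M}" for ss y
    using that
  proof (induction ss arbitrary: y)
    case Nil then show ?case by (simp add: matrix_vector_mul_lid)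
  next
    case (Cons s ss)
    have "qf P (mat_prod_seq F (s # ss) *v y) = qf P (mat_prod_seq F ss *v (F s *v y))"
      by (simp add: matrix_vector_mul_assoc)
    also have "\<dots> \<le> (R^2)^(length ss) * qf P (F s *v y)" using Cons.IH[of "F s *v y"] Cons.prems by simp
    also have "\<dots> \<le> (R^2)^(length ss) * (R^2 * qf P y)"
      using step[of s y] Cons.prems by (intro mult_left_mono) auto
    finally show ?case by (simp add: ac_simps)
  qed
  have nubound: "nu ss \<le> sqrt \<kappa> * R^k" if "ss \<in> U k" for ss k
    unfolding nu_def
  proof (rule onorm_le)
    fix y
    have ss: "set ss \<subseteq> {1..M}" "length ss = k" using that unfolding U_def by (auto simp: lists_eq_set)
    have "lmin * (norm (mat_prod_seq F ss *v y))^2 \<le> (R^2)^k * qf P y"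
      using qmin[of "mat_prod_seq F ss *v y"] prodq[OF ss(1), of y] ss(2) by simp
    also have "\<dots> \<le> (R^2)^k * (lmax * (norm y)^2)" using qmax[of y] by (intro mult_left_mono) auto
    finally have "(norm (mat_prod_seq F ss *v y))^2 \<le> (R^2)^k * (lmax * (norm y)^2) / lmin"
      using lmin1 by (simp add: pos_le_divide_eq mult.commute)
    also have "\<dots> = \<kappa> * (R^k)^2 * (norm y)^2"
    proof -
      have "(R^2)^k = (R^k)^2" by (simp add: power_mult[symmetric] mult.commute)
      then show ?thesis unfolding \<kappa>_def by simp
    qed
    also have "\<dots> = (sqrt \<kappa> * R^k * norm y)^2"
      using k0 by (simp add: power_mult_distrib)
    finally show "norm (mat_prod_seq F ss *v y) \<le> sqrt \<kappa> * R^k * norm y"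
      by (rule power2_le_imp_le) (use k0 R0 in auto)
  qed
  have ubound: "u k \<le> sqrt \<kappa> * R^k" for k
    unfolding u_def using Ufin Une nubound by (simp add: Max_le_iff)
  have lim1: "(\<lambda>k. sqrt \<kappa> powr (1/real k) * R) \<longlonglongrightarrow> 1 * R"
  proof -
    have False: "\<kappa> \<noteq> 0" using kpos by simp
    then have "(\<lambda>k. sqrt \<kappa> powr (1/real k)) \<longlonglongrightarrow> sqrt \<kappa> powr 0"
      using k0 by (intro tendsto_powr tendsto_const lim_1_over_n) auto
    then show ?thesis using False k0 by (intro tendsto_mult tendsto_const) auto
  qed
  have le: "u k powr (1/real k) \<le> sqrt \<kappa> powr (1/real k) * R" if "k \<ge> 1" for k
  proof -
    have "u k powr (1/real k) \<le> (sqrt \<kappa> * R^k) powr (1/real k)"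
      using ubound[of k] unn[of k] by (intro powr_mono2) auto
    also have "\<dots> = sqrt \<kappa> powr (1/real k) * (R^k) powr (1/real k)"
      using k0 R0 by (simp add: powr_mult)
    also have "(R^k) powr (1/real k) = R"
    proof (cases "R = 0")
      case True then show ?thesis using that by simp
    next
      case False then show ?thesis using R0 pow_powr_inv[OF _ that] by simp
    qed
    finally show ?thesis .
  qed
  have "lim (\<lambda>k. u k powr (1/real k)) \<le> 1 * R"
    using conv[unfolded convergent_LIMSEQ_iff] lim1 le by (intro LIMSEQ_le) auto
  then show ?thesis using jsr_eq by simp
qed



lemma feasK_step:
  assumes "feasK \<omega> A B P \<gamma> K" "(x, \<sigma>) \<in> \<omega>"
  shows "qf P (closed_loop A B K \<sigma> *v x) \<le> \<gamma>^2 * qf P x"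
proof -
  define v where "v = A \<sigma> *v x + B *v (K *v x)"
  have v: "closed_loop A B K \<sigma> *v x = v"
    unfolding v_def closed_loop_def by (simp add: matrix_vector_mult_add_rdistrib matrix_vector_mul_assoc)
  have "0 \<le> 1\<^sup>2 * \<gamma>\<^sup>2 * (x \<bullet> (P *v x)) + 2 * 1 * (v \<bullet> (P *v (- v))) + (- v) \<bullet> (P *v (- v))"
    using assms unfolding feasK_def v_def Let_def by fast
  then have "0 \<le> \<gamma>\<^sup>2 * (x \<bullet> (P *v x)) - v \<bullet> (P *v v)"
    by (simp add: vec.neg)
  then show ?thesis unfolding v qf_def by simp
qed

theorem lemma3:
  fixes A :: "nat \<Rightarrow> real^'n^'n" and B :: "real^'m^'n"
    and M N :: nat and \<omega> :: "((real^'n) \<times> nat) set"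
    and tol \<epsilon> \<gamma> :: real and P :: "real^'n^'n" and K :: "real^'n^'m"
  assumes "M \<ge> 1" and "N \<ge> 1"
    and "\<omega> \<subseteq> unit_sphere \<times> {1..M}" and "finite \<omega>" and "card \<omega> = N"
    and "tol > 0"
    and "algorithm1_output \<omega> A B tol \<gamma> P K"
    and "0 < \<epsilon>" and "\<epsilon> < 1"
    and "eps_covering \<omega> M \<epsilon>"
  shows "ereal (jsr M (closed_loop A B K)) \<le>
    (if kappa P * (1 - cos (cap_delta_inv TYPE('n) \<epsilon>)) \<ge> 1 then \<infinity>
     else ereal (\<gamma> / (1 - kappa P * (1 - cos (cap_delta_inv TYPE('n) \<epsilon>)))))"
proof (cases "kappa P * (1 - cos (cap_delta_inv TYPE('n) \<epsilon>)) \<ge> 1")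
  case True then show ?thesis by simp
next
  case False
  define c where "c = cos (cap_delta_inv TYPE('n) \<epsilon>)"
  have D: "0 < 1 - kappa P * (1 - c)" using False unfolding c_def by simp
  have c1: "c \<le> 1" unfolding c_def by simp
  obtain Ps Ks gs k hs where alg:
       "\<forall>j\<le>(k::nat). optP \<omega> A B (Ks j) (hs j) (Ps (Suc j)) \<and>
               optK \<omega> A B (Ps (Suc j)) (gs (Suc j)) (Ks (Suc j))"
       "\<gamma> = gs (Suc k)" "P = Ps (Suc k)" "K = Ks (Suc k)"
    using assms(7) unfolding algorithm1_output_def by blast
  have oK: "optK \<omega> A B P \<gamma> K" and oP: "optP \<omega> A B (Ks k) (hs k) P"
    using alg by auto
  have fK: "feasK \<omega> A B P \<gamma> K" using oK unfolding optK_def by blast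
  have g0: "\<gamma> \<ge> 0" using fK unfolding feasK_def by blast
  have psd: "psd_ge_I P" using oP unfolding optP_def feasP_def by blast
  define R where "R = \<gamma> / (1 - kappa P * (1 - c))"
  have R0: "R \<ge> 0" unfolding R_def using g0 D by simp
  have step: "qf P (closed_loop A B K \<sigma> *v y) \<le> R^2 * qf P y" if \<sigma>: "\<sigma> \<in> {1..M}" for \<sigma> y
    unfolding R_def
  proof (rule core[OF psd D c1])
    fix x :: "real^'n" assume x: "norm x = 1"
    then have "x \<in> unit_sphere" unfolding unit_sphere_def by simp
    then obtain z where z: "z \<in> unit_sphere" "(z, \<sigma>) \<in> \<omega>" "c \<le> \<bar>z \<bullet> x\<bar>"
      using assms(10) \<sigma> unfolding eps_covering_def c_def by blast
    show "\<exists>z. norm z = 1 \<and> qf P (closed_loop A B K \<sigma> *v z) \<le> \<gamma>^2 * qf P z \<and> c \<le> \<bar>z \<bullet> x\<bar>"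
      using z feasK_step[OF fK z(2)] unfolding unit_sphere_def by blast
  qed
  have "jsr M (closed_loop A B K) \<le> R" by (rule jsr_bound[OF assms(1) psd R0 step])
  then show ?thesis using False unfolding R_def c_def by simp
qed


end
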